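(* Let $\mathcal C=\{a_1C^1,\ldots,a_mC^m\}$ be a complete graph decomposition of a weighted graph $H=H(V,w)$, where $C^j$ has vertex set $V_j$. For each $u\in V$, let $\lambda(\mathcal C_u)$ be the sum of the smallest eigenvalues of the weighted graphs $a_jC^j$ with $u\in V_j$, and let $\lambda(\mathcal C)=\min_u\lambda(\mathcal C_u)$. Then $\lambda(H)\ge\lambda(\mathcal C)$. Moreover, equality holds if and only if there is a nonzero real vector $x=(x_u)_{u\in V}$ such that (1) $x_u=0$ whenever $\lambda(\mathcal C_u)>\lambda(\mathcal C)$; and (2) $x$ is constant on $V_j$ for every $j$ with $a_j<0$, and $\sum_{u\in V_j}x_u=0$ for every $j$ with $a_j>0$ and $|V_j|>1$.
   Context: A weighted graph $H(V,w)$ consists of a finite vertex set $V$ and a real function $w$ on unordered pairs $\{u,v\}$ of vertices (including $u=v$); its adjacency matrix $A(w)$ has $(u,v)$-entry $w(uv)$, and $\lambda(H)$ is its smallest eigenvalue. A decomposition of $H$ is a family of weighted graphs $H^j(V_j,w_j)$ with $V_j\subseteq V$ and $w(uv)=\sum_j w_j(uv)$ for all pairs, where $w_j(uv)=0$ if $u$ or $v$ is not in $V_j$. A complete graph decomposition is a decomposition in which each member is $a_jC^j$ with $a_j$ a nonzero real number and $C^j$ either the simple complete graph on $V_j$ ($|V_j|\ge 2$; weight $a_j$ on every pair of distinct vertices of $V_j$ and $0$ on loops) or the looped complete graph on $V_j$ ($|V_j|\ge1$; weight $a_j$ on every pair of vertices of $V_j$, including each loop $uu$). The complete graphs need not be subgraphs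 of $H$. *)

theory Defs
  imports Complex_Main
begin

text \<open>A weighted graph H(V,w) is a finite vertex set V together with a symmetric
  weight function w (w u u is the loop weight).  Its adjacency matrix is the
  V x V matrix with entries w u v.\<close>

definition is_eigenvalue :: "'a set \<Rightarrow> ('a \<Rightarrow> 'a \<Rightarrow> real) \<Rightarrow> real \<Rightarrow> bool" where
  "is_eigenvalue S M \<mu> \<longleftrightarrow>
     (\<exists>x :: 'a \<Rightarrow> real. (\<exists>u\<in>S. x u \<noteq> 0) \<and>
        (\<forall>u\<in>S. (\<Sum>v\<in>S. M u v * x v) = \<mu> * x u))"

definition smallest_eigenvalue :: "'a set \<Rightarrow> ('a \<Rightarrow> 'a \<Rightarrow> real) \<Rightarrow> real" where
  "smallest_eigenvalue S M = Min {\<mu>. is_eigenvalue S M \<mu>}"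

text \<open>Weight function of the complete graph a*C on vertex set Vj:
  simple (looped = False) or looped (looped = True).\<close>
definition complete_weight :: "real \<Rightarrow> 'a set \<Rightarrow> bool \<Rightarrow> 'a \<Rightarrow> 'a \<Rightarrow> real" where
  "complete_weight a Vj looped u v =
     (if u \<in> Vj \<and> v \<in> Vj \<and> (u \<noteq> v \<or> looped) then a else 0)"

definition complete_graph_decomposition ::
  "'a set \<Rightarrow> ('a \<Rightarrow> 'a \<Rightarrow> real) \<Rightarrow> nat \<Rightarrow> (nat \<Rightarrow> real) \<Rightarrow> (nat \<Rightarrow> 'a set) \<Rightarrow> (nat \<Rightarrow> bool) \<Rightarrow> bool"
  where
  "complete_graph_decomposition V w m a Vs lp \<longleftrightarrow>
     (\<forall>j<m. a j \<noteq> 0 \<and> Vs j \<subseteq> V \<and> (if lp j then card (Vs j) \<ge> 1 else card (Vs j) \<ge> 2)) \<and>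
     (\<forall>u\<in>V. \<forall>v\<in>V. w u v = (\<Sum>j<m. complete_weight (a j) (Vs j) (lp j) u v))"

definition lambda_Cu :: "nat \<Rightarrow> (nat \<Rightarrow> real) \<Rightarrow> (nat \<Rightarrow> 'a set) \<Rightarrow> (nat \<Rightarrow> bool) \<Rightarrow> 'a \<Rightarrow> real" where
  "lambda_Cu m a Vs lp u =
     (\<Sum>j\<in>{j. j < m \<and> u \<in> Vs j}. smallest_eigenvalue (Vs j) (complete_weight (a j) (Vs j) (lp j)))"

definition lambda_C :: "'a set \<Rightarrow> nat \<Rightarrow> (nat \<Rightarrow> real) \<Rightarrow> (nat \<Rightarrow> 'a set) \<Rightarrow> (nat \<Rightarrow> bool) \<Rightarrow> real" where
  "lambda_C V m a Vs lp = Min (lambda_Cu m a Vs lp ` V)"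

end

theory Submission imports Defs "Jordan_Normal_Form.Spectral_Radius" begin

lemma sum_list_conv:
  assumes "distinct xs" "set xs = S"
  shows "(\<Sum>v\<in>S. f v) = (\<Sum>j=0..<length xs. f (xs!j))"
proof -
  have b: "bij_betw ((!) xs) {..<length xs} S" by (rule bij_betw_nth, use assms in auto)
  have "(\<Sum>v\<in>S. f v) = (\<Sum>j\<in>{..<length xs}. f (xs!j))"
    using sum.reindex_bij_betw[OF b, of f] by simp
  also have "\<dots> = (\<Sum>j=0..<length xs. f (xs!j))" by (simp add: atLeast0LessThan)
  finally show ?thesis .
qed

lemma eig_conv:
  fixes M :: "'a \<Rightarrow> 'a \<Rightarrow> 'b::field"
  assumes d: "distinct xs" and s: "set xs = S"
  shows "(\<exists>x. (\<exists>u\<in>S. x u \<noteq> 0) \<and> (\<forall>u\<in>S. (\<Sum>v\<in>S. M u v * x v) = \<mu> * x u))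
     \<longleftrightarrow> eigenvalue (mat (length xs) (length xs) (\<lambda>(i,j). M (xs!i) (xs!j))) \<mu>"
    (is "?L \<longleftrightarrow> eigenvalue ?B \<mu>")
proof
  let ?n = "length xs"
  assume ?L
  then obtain x where nz: "\<exists>u\<in>S. x u \<noteq> 0" and eq: "\<forall>u\<in>S. (\<Sum>v\<in>S. M u v * x v) = \<mu> * x u" by blast
  define v where "v = vec ?n (\<lambda>j. x (xs!j))"
  have vc: "v \<in> carrier_vec ?n" unfolding v_def by simp
  have v0: "v \<noteq> 0\<^sub>v ?n"
  proof
    assume h: "v = 0\<^sub>v ?n"
    from nz obtain u where u: "u \<in> S" "x u \<noteq> 0" by blast
    then obtain k where k: "k < ?n" "xs!k = u" using s by (auto simp: in_set_conv_nth)
    have "v $ k = x u" using k unfolding v_def by simp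
    with h k u show False by simp
  qed
  have "?B *\<^sub>v v = \<mu> \<cdot>\<^sub>v v"
  proof (rule eq_vecI)
    fix i assume i: "i < dim_vec (\<mu> \<cdot>\<^sub>v v)"
    hence i': "i < ?n" unfolding v_def by simp
    have "(?B *\<^sub>v v) $ i = (\<Sum>j=0..<?n. M (xs!i) (xs!j) * x (xs!j))"
      using i' by (simp add: scalar_prod_def v_def)
    also have "\<dots> = (\<Sum>w\<in>S. M (xs!i) w * x w)" using sum_list_conv[OF d s, of "\<lambda>w. M (xs!i) w * x w"] by simp
    also have "\<dots> = \<mu> * x (xs!i)" using eq i' s by auto
    also have "\<dots> = (\<mu> \<cdot>\<^sub>v v) $ i" using i' by (simp add: v_def)
    finally show "(?B *\<^sub>v v) $ i = (\<mu> \<cdot>\<^sub>v v) $ i" .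
  qed (simp add: v_def)
  thus "eigenvalue ?B \<mu>" using vc v0 unfolding eigenvalue_def eigenvector_def by auto
next
  let ?n = "length xs"
  assume "eigenvalue ?B \<mu>"
  then obtain v where vc: "v \<in> carrier_vec ?n" and v0: "v \<noteq> 0\<^sub>v ?n" and ev: "?B *\<^sub>v v = \<mu> \<cdot>\<^sub>v v"
    unfolding eigenvalue_def eigenvector_def by auto
  have b: "bij_betw ((!) xs) {..<length xs} S" by (rule bij_betw_nth, use d s in auto)
  define x where "x u = v $ (inv_into {..<?n} ((!) xs) u)" for u
  have xv: "x (xs!j) = v $ j" if "j < ?n" for j
    using b that unfolding x_def bij_betw_def by (simp add: inv_into_f_f)
  have "\<exists>u\<in>S. x u \<noteq> 0"
  proof (rule ccontr)
    assume "\<not> ?thesis"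
    hence "\<forall>j<?n. v $ j = 0" using xv s by (metis nth_mem)
    hence "v = 0\<^sub>v ?n" using vc by (intro eq_vecI) auto
    with v0 show False by simp
  qed
  moreover have "\<forall>u\<in>S. (\<Sum>w\<in>S. M u w * x w) = \<mu> * x u"
  proof
    fix u assume "u \<in> S"
    then obtain i where i: "i < ?n" "xs!i = u" using s by (auto simp: in_set_conv_nth)
    have "(\<Sum>w\<in>S. M u w * x w) = (\<Sum>j=0..<?n. M (xs!i) (xs!j) * v $ j)"
      unfolding sum_list_conv[OF d s, of "\<lambda>w. M u w * x w"] using i xv
      by (intro sum.cong) auto
    also have "\<dots> = (?B *\<^sub>v v) $ i" using i vc by (simp add: scalar_prod_def)
    also have "\<dots> = \<mu> * x u" using ev i vc xv[of i] by simp
    finally show "(\<Sum>w\<in>S. M u w * x w) = \<mu> * x u" .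
  qed
  ultimately show ?L by blast
qed

lemma eig_finite:
  fixes M :: "'a \<Rightarrow> 'a \<Rightarrow> real"
  assumes "finite S"
  shows "finite {\<mu>. is_eigenvalue S M \<mu>}"
proof -
  obtain xs where d: "distinct xs" and s: "set xs = S" using finite_distinct_list[OF assms] by metis
  let ?B = "mat (length xs) (length xs) (\<lambda>(i,j). M (xs!i) (xs!j))"
  have "{\<mu>. is_eigenvalue S M \<mu>} = spectrum ?B"
    unfolding spectrum_def is_eigenvalue_def using eig_conv[OF d s, of M] by auto
  moreover have "?B \<in> carrier_mat (length xs) (length xs)" by simp
  ultimately show ?thesis using card_finite_spectrum(1) by metis
qed

lemma eig_exists:
  fixes M :: "'a \<Rightarrow> 'a \<Rightarrow> real"
  assumes fin: "finite S" and ne: "S \<noteq> {}" and sym: "\<forall>u\<in>S. \<forall>v\<in>S. M u v = M v u"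
  shows "\<exists>\<mu>. is_eigenvalue S M \<mu>"
proof -
  obtain xs where d: "distinct xs" and s: "set xs = S" using finite_distinct_list[OF fin] by metis
  let ?Mc = "\<lambda>u v. complex_of_real (M u v)"
  let ?B = "mat (length xs) (length xs) (\<lambda>(i,j). ?Mc (xs!i) (xs!j))"
  have "length xs > 0" using ne s by auto
  hence "spectrum ?B \<noteq> {}" by (intro spectrum_non_empty) auto
  then obtain z where "eigenvalue ?B z" unfolding spectrum_def by auto
  then obtain y where ynz: "\<exists>u\<in>S. y u \<noteq> 0" and yeq: "\<forall>u\<in>S. (\<Sum>v\<in>S. ?Mc u v * y v) = z * y u"
    using eig_conv[OF d s, of ?Mc z] by blast
  define L where "L = (\<Sum>u\<in>S. cnj (y u) * (\<Sum>v\<in>S. ?Mc u v * y v))"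
  define N where "N = (\<Sum>u\<in>S. (cmod (y u))^2)"
  have Npos: "N > 0"
  proof -
    from ynz obtain u where "u \<in> S" "y u \<noteq> 0" by blast
    thus ?thesis unfolding N_def using fin by (intro sum_pos2[of S u]) auto
  qed
  have "L = (\<Sum>u\<in>S. z * (y u * cnj (y u)))" unfolding L_def using yeq by (intro sum.cong) auto
  also have "\<dots> = z * complex_of_real N" unfolding N_def
    by (simp add: sum_distrib_left complex_norm_square[symmetric])
  finally have L1: "L = z * complex_of_real N" .
  have "cnj L = (\<Sum>u\<in>S. \<Sum>v\<in>S. y u * ?Mc u v * cnj (y v))"
    unfolding L_def by (simp add: sum_distrib_left mult_ac)
  also have "\<dots> = (\<Sum>v\<in>S. \<Sum>u\<in>S. y u * ?Mc u v * cnj (y v))" by (rule sum.swap)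
  also have "\<dots> = L" unfolding L_def using sym
    by (auto simp: sum_distrib_left mult_ac intro!: sum.cong)
  finally have "cnj L = L" .
  hence "Im L = 0" by (metis cnj.simps(2) complex.sel(2) neg_equal_zero complex_cnj_cancel_iff cnj.sel(2))
  hence "Im z * N = 0" using L1 by simp
  hence zr: "Im z = 0" using Npos by simp
  have eqr: "(\<Sum>v\<in>S. M u v * f (y v)) = Re z * f (y u)"
    if u: "u \<in> S" and f: "f = Re \<or> f = Im" for u f
  proof -
    have "f (\<Sum>v\<in>S. ?Mc u v * y v) = f (z * y u)" using yeq u by simp
    thus ?thesis using f zr by (auto simp: Re_sum Im_sum)
  qed
  from ynz obtain u0 where u0: "u0 \<in> S" "y u0 \<noteq> 0" by blast
  hence "Re (y u0) \<noteq> 0 \<or> Im (y u0) \<noteq> 0" using complex_eqI by force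
  thus ?thesis
  proof
    assume "Re (y u0) \<noteq> 0"
    thus ?thesis unfolding is_eigenvalue_def using eqr u0
      by (intro exI[of _ "Re z"] exI[of _ "\<lambda>v. Re (y v)"]) auto
  next
    assume "Im (y u0) \<noteq> 0"
    thus ?thesis unfolding is_eigenvalue_def using eqr u0
      by (intro exI[of _ "Re z"] exI[of _ "\<lambda>v. Im (y v)"]) auto
  qed
qed

lemma smallest_props:
  fixes M :: "'a \<Rightarrow> 'a \<Rightarrow> real"
  assumes "finite S" "S \<noteq> {}" "\<forall>u\<in>S. \<forall>v\<in>S. M u v = M v u"
  shows "is_eigenvalue S M (smallest_eigenvalue S M)"
    and "\<And>\<mu>. is_eigenvalue S M \<mu> \<Longrightarrow> smallest_eigenvalue S M \<le> \<mu>"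
proof -
  have f: "finite {\<mu>. is_eigenvalue S M \<mu>}" by (rule eig_finite[OF assms(1)])
  have ne: "{\<mu>. is_eigenvalue S M \<mu>} \<noteq> {}" using eig_exists[OF assms] by auto
  show "is_eigenvalue S M (smallest_eigenvalue S M)"
    using Min_in[OF f ne] unfolding smallest_eigenvalue_def by simp
  show "smallest_eigenvalue S M \<le> \<mu>" if "is_eigenvalue S M \<mu>" for \<mu>
    using Min_le[OF f] that unfolding smallest_eigenvalue_def by simp
qed

lemma smallest_eqI:
  fixes M :: "'a \<Rightarrow> 'a \<Rightarrow> real"
  assumes "finite S" "is_eigenvalue S M e" "\<And>\<mu>. is_eigenvalue S M \<mu> \<Longrightarrow> e \<le> \<mu>"
  shows "smallest_eigenvalue S M = e"
  unfolding smallest_eigenvalue_def using assms eig_finite[OF assms(1), of M]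
  by (intro Min_eqI) auto

lemma rayleigh:
  fixes M :: "'a \<Rightarrow> 'a \<Rightarrow> real"
  assumes "\<forall>u\<in>S. (\<Sum>v\<in>S. M u v * x v) = \<mu> * x u"
  shows "(\<Sum>u\<in>S. x u * (\<Sum>v\<in>S. M u v * x v)) = \<mu> * (\<Sum>u\<in>S. (x u)^2)"
  using assms by (simp add: sum_distrib_left power2_eq_square mult_ac)

lemma sq_pos:
  fixes x :: "'a \<Rightarrow> real"
  assumes "finite S" "\<exists>u\<in>S. x u \<noteq> 0"
  shows "(\<Sum>u\<in>S. (x u)^2) > 0"
proof -
  from assms obtain u where "u \<in> S" "x u \<noteq> 0" by blast
  thus ?thesis using assms by (intro sum_pos2[of S u]) auto
qed

definition ecg :: "real \<Rightarrow> nat \<Rightarrow> bool \<Rightarrow> real" where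
  "ecg a n lp = (if lp then (if a > 0 \<and> n \<ge> 2 then 0 else a * real n)
                 else (if a > 0 then - a else a * (real n - 1)))"

definition cgcond :: "real \<Rightarrow> 'a set \<Rightarrow> ('a \<Rightarrow> real) \<Rightarrow> bool" where
  "cgcond a S x \<longleftrightarrow> (a < 0 \<longrightarrow> (\<forall>u\<in>S. \<forall>v\<in>S. x u = x v)) \<and> (a > 0 \<and> card S > 1 \<longrightarrow> sum x S = 0)"

lemma cg_row:
  assumes "finite S" "u \<in> S"
  shows "(\<Sum>v\<in>S. complete_weight a S lp u v * x v) = (if lp then a * sum x S else a * (sum x S - x u))"
proof (cases lp)
  case True
  have "(\<Sum>v\<in>S. complete_weight a S lp u v * x v) = (\<Sum>v\<in>S. a * x v)"
    using assms True by (intro sum.cong) (auto simp: complete_weight_def)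
  thus ?thesis using True by (simp add: sum_distrib_left)
next
  case False
  have "(\<Sum>v\<in>S. complete_weight a S lp u v * x v) = (\<Sum>v\<in>S. a * x v - (if v = u then a * x u else 0))"
    using assms False by (intro sum.cong) (auto simp: complete_weight_def)
  also have "\<dots> = a * sum x S - a * x u" using assms
    by (simp add: sum_subtractf sum_distrib_left)
  finally show ?thesis using False by (simp add: algebra_simps)
qed

lemma cg_qf:
  assumes "finite S"
  shows "(\<Sum>u\<in>S. x u * (\<Sum>v\<in>S. complete_weight a S lp u v * x v)) =
    (if lp then a * (sum x S)^2 else a * ((sum x S)^2 - (\<Sum>u\<in>S. (x u)^2)))"
proof -
  have "(\<Sum>u\<in>S. x u * (\<Sum>v\<in>S. complete_weight a S lp u v * x v)) =
        (\<Sum>u\<in>S. x u * (if lp then a * sum x S else a * (sum x S - x u)))"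
    by (intro sum.cong refl) (simp add: cg_row[OF assms])
  thus ?thesis
    by (cases lp) (simp_all add: sum_distrib_left sum_distrib_right power2_eq_square
       sum_subtractf algebra_simps)
qed

lemma cs_identity:
  fixes x :: "'a \<Rightarrow> real"
  assumes "finite S"
  shows "real (card S) * (\<Sum>u\<in>S. (x u)^2) - (sum x S)^2 = (\<Sum>u\<in>S. \<Sum>v\<in>S. (x u - x v)^2) / 2"
proof -
  have "(\<Sum>u\<in>S. \<Sum>v\<in>S. (x u - x v)^2) = (\<Sum>u\<in>S. \<Sum>v\<in>S. (x u)^2 + (x v)^2 - 2 * (x u * x v))"
    by (simp add: power2_diff mult.assoc)
  also have "\<dots> = 2 * (real (card S) * (\<Sum>u\<in>S. (x u)^2)) - 2 * (sum x S)^2"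
    by (simp add: sum.distrib sum_subtractf sum_distrib_left[symmetric] sum_distrib_right[symmetric]
         power2_eq_square sum.swap[of "\<lambda>u v. (x v)^2"] algebra_simps)
       (simp add: sum_distrib_left mult_ac)
  finally show ?thesis by simp
qed

lemma cs_nonneg:
  fixes x :: "'a \<Rightarrow> real"
  assumes "finite S"
  shows "real (card S) * (\<Sum>u\<in>S. (x u)^2) - (sum x S)^2 \<ge> 0"
    and "real (card S) * (\<Sum>u\<in>S. (x u)^2) - (sum x S)^2 = 0 \<longleftrightarrow> (\<forall>u\<in>S. \<forall>v\<in>S. x u = x v)"
proof -
  have nn: "(\<Sum>u\<in>S. \<Sum>v\<in>S. (x u - x v)^2) \<ge> 0" by (intro sum_nonneg) auto
  thus "real (card S) * (\<Sum>u\<in>S. (x u)^2) - (sum x S)^2 \<ge> 0" using cs_identity[OF assms, of x] by simp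
  have e1: "(\<Sum>u\<in>S. \<Sum>v\<in>S. (x u - x v)^2) = 0 \<longleftrightarrow> (\<forall>u\<in>S. \<forall>v\<in>S. x u = x v)"
    using assms by (simp add: sum_nonneg_eq_0_iff sum_nonneg)
  have e2: "real (card S) * (\<Sum>u\<in>S. (x u)^2) - (sum x S)^2 = 0 \<longleftrightarrow> (\<Sum>u\<in>S. \<Sum>v\<in>S. (x u - x v)^2) = 0"
    using cs_identity[OF assms, of x] by linarith
  thus "real (card S) * (\<Sum>u\<in>S. (x u)^2) - (sum x S)^2 = 0 \<longleftrightarrow> (\<forall>u\<in>S. \<forall>v\<in>S. x u = x v)"
    using e1 e2 by simp
qed

lemma cg_ineq:
  assumes fin: "finite S" and a: "a \<noteq> 0" and c: "if lp then card S \<ge> 1 else card S \<ge> 2"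
  shows "(\<Sum>u\<in>S. x u * (\<Sum>v\<in>S. complete_weight a S lp u v * x v)) \<ge> ecg a (card S) lp * (\<Sum>u\<in>S. (x u)^2)
    \<and> ((\<Sum>u\<in>S. x u * (\<Sum>v\<in>S. complete_weight a S lp u v * x v)) = ecg a (card S) lp * (\<Sum>u\<in>S. (x u)^2)
       \<longleftrightarrow> cgcond a S x)"
proof -
  define s where "s = sum x S"
  define Q where "Q = (\<Sum>u\<in>S. (x u)^2)"
  define n where "n = card S"
  define q where "q = (\<Sum>u\<in>S. x u * (\<Sum>v\<in>S. complete_weight a S lp u v * x v))"
  have D: "real n * Q - s^2 \<ge> 0" and Dz: "real n * Q - s^2 = 0 \<longleftrightarrow> (\<forall>u\<in>S. \<forall>v\<in>S. x u = x v)"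
    using cs_nonneg[OF fin, of x] by (simp_all add: s_def Q_def n_def)
  have q: "q = (if lp then a * s^2 else a * (s^2 - Q))" using cg_qf[OF fin] by (simp add: s_def Q_def q_def)
  have cond: "cgcond a S x \<longleftrightarrow> (a < 0 \<longrightarrow> (\<forall>u\<in>S. \<forall>v\<in>S. x u = x v)) \<and> (a > 0 \<and> n > 1 \<longrightarrow> s = 0)"
    unfolding cgcond_def s_def n_def ..
  have "q - ecg a n lp * Q \<ge> 0 \<and> (q - ecg a n lp * Q = 0 \<longleftrightarrow> cgcond a S x)"
  proof (cases lp)
    case True
    show ?thesis
    proof (cases "a > 0")
      case apos: True
      show ?thesis
      proof (cases "n \<ge> 2")
        case True
        thus ?thesis using \<open>lp\<close> apos q cond by (simp add: ecg_def)
      next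
        case False
        hence "n = 1" using c \<open>lp\<close> n_def by auto
        hence "card S = 1" using n_def by simp
        then obtain u0 where "S = {u0}" by (rule card_1_singletonE)
        hence "s^2 = Q" by (simp add: s_def Q_def)
        have e: "ecg a n lp = a" using \<open>lp\<close> \<open>n = 1\<close> by (simp add: ecg_def)
        have "q - ecg a n lp * Q = 0" using q \<open>lp\<close> e \<open>s^2 = Q\<close> by simp
        moreover have "cgcond a S x" using cond apos \<open>n = 1\<close> by simp
        ultimately show ?thesis by simp
      qed
    next
      case aneg: False
      hence an: "a < 0" using a by simp
      have "q - ecg a n lp * Q = (- a) * (real n * Q - s^2)"
        using \<open>lp\<close> an q by (simp add: ecg_def algebra_simps)
      moreover have "(- a) * (real n * Q - s^2) \<ge> 0" using an D by (intro mult_nonneg_nonneg) auto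
      moreover have "(- a) * (real n * Q - s^2) = 0 \<longleftrightarrow> real n * Q - s^2 = 0" using an by simp
      moreover have "cgcond a S x \<longleftrightarrow> (\<forall>u\<in>S. \<forall>v\<in>S. x u = x v)" using cond an by simp
      ultimately show ?thesis using Dz by simp
    qed
  next
    case False
    show ?thesis
    proof (cases "a > 0")
      case apos: True
      have "n > 1" using c False n_def by auto
      have e: "ecg a n lp = - a" using False apos by (simp add: ecg_def)
      have "q - ecg a n lp * Q = a * s^2" using q False e by (simp add: algebra_simps)
      moreover have "a * s^2 \<ge> 0" using apos by simp
      moreover have "a * s^2 = 0 \<longleftrightarrow> s = 0" using apos by simp
      moreover have "cgcond a S x \<longleftrightarrow> s = 0" using cond apos \<open>n > 1\<close> by simp
      ultimately show ?thesis by simp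
    next
      case aneg: False
      hence an: "a < 0" using a by simp
      have "q - ecg a n lp * Q = (- a) * (real n * Q - s^2)"
        using False an q by (simp add: ecg_def algebra_simps)
      moreover have "(- a) * (real n * Q - s^2) \<ge> 0" using an D by (intro mult_nonneg_nonneg) auto
      moreover have "(- a) * (real n * Q - s^2) = 0 \<longleftrightarrow> real n * Q - s^2 = 0" using an by simp
      moreover have "cgcond a S x \<longleftrightarrow> (\<forall>u\<in>S. \<forall>v\<in>S. x u = x v)" using cond an by simp
      ultimately show ?thesis using Dz by simp
    qed
  qed
  thus ?thesis unfolding q_def Q_def n_def by auto
qed

lemma cg_eig:
  assumes fin: "finite S" and a: "a \<noteq> 0" and c: "if lp then card S \<ge> 1 else card S \<ge> 2"
    and cd: "cgcond a S x" and u: "u \<in> S"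
  shows "(\<Sum>v\<in>S. complete_weight a S lp u v * x v) = ecg a (card S) lp * x u"
proof -
  define s where "s = sum x S"
  have r: "(\<Sum>v\<in>S. complete_weight a S lp u v * x v) = (if lp then a * s else a * (s - x u))"
    unfolding s_def by (rule cg_row[OF fin u])
  show ?thesis
  proof (cases "a > 0")
    case apos: True
    show ?thesis
    proof (cases "card S \<ge> 2")
      case True
      hence "s = 0" using cd apos unfolding cgcond_def s_def by simp
      moreover have "ecg a (card S) lp = (if lp then 0 else - a)" using apos True by (simp add: ecg_def)
      ultimately show ?thesis using r by simp
    next
      case False
      have lp: "lp" using c False by (auto split: if_splits)
      have "card S = 1" using c False lp by simp
      then obtain u0 where S: "S = {u0}" by (rule card_1_singletonE)
      hence "s = x u" using u by (simp add: s_def)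
      moreover have "ecg a (card S) lp = a" using \<open>card S = 1\<close> lp by (simp add: ecg_def)
      ultimately show ?thesis using r lp by simp
    qed
  next
    case False
    hence an: "a < 0" using a by linarith
    have "a < 0 \<longrightarrow> (\<forall>u\<in>S. \<forall>v\<in>S. x u = x v)" using cd unfolding cgcond_def by blast
    hence cst: "\<forall>u\<in>S. \<forall>v\<in>S. x u = x v" using an by blast
    have "s = (\<Sum>v\<in>S. x u)" unfolding s_def using cst u by (intro sum.cong refl) blast
    hence sv: "s = real (card S) * x u" by simp
    have "ecg a (card S) lp = (if lp then a * real (card S) else a * (real (card S) - 1))"
      using an by (simp add: ecg_def)
    thus ?thesis using r sv by (simp add: algebra_simps)
  qed
qed

lemma cg_smallest:
  assumes fin: "finite S" and a: "a \<noteq> 0" and c: "if lp then card S \<ge> 1 else card S \<ge> 2"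
  shows "smallest_eigenvalue S (complete_weight a S lp) = ecg a (card S) lp"
proof (rule smallest_eqI[OF fin])
  have ne: "S \<noteq> {}" using c fin by (auto split: if_splits)
  have "\<exists>x. (\<exists>u\<in>S. x u \<noteq> 0) \<and> cgcond a S x"
  proof (cases "a > 0 \<and> card S \<ge> 2")
    case True
    then obtain u0 u1 where u: "u0 \<in> S" "u1 \<in> S" "u0 \<noteq> u1"
    proof -
      obtain u0 where u0: "u0 \<in> S" using ne by blast
      have "card (S - {u0}) \<ge> 1" using True u0 fin by auto
      hence "S - {u0} \<noteq> {}" by (metis card.empty not_one_le_zero)
      then obtain u1 where "u1 \<in> S - {u0}" by blast
      thus ?thesis using u0 that by blast
    qed
    define x :: "'a \<Rightarrow> real" where "x v = (if v = u0 then 1 else 0) - (if v = u1 then 1 else 0)" for v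
    have "sum x S = 0" unfolding x_def using fin u by (simp add: sum_subtractf)
    moreover have "x u0 \<noteq> 0" using u by (simp add: x_def)
    ultimately show ?thesis using True u unfolding cgcond_def by (intro exI[of _ x]) auto
  next
    case False
    obtain u0 where "u0 \<in> S" using ne by blast
    thus ?thesis using False unfolding cgcond_def by (intro exI[of _ "\<lambda>_. 1"]) auto
  qed
  then obtain x where nz: "\<exists>u\<in>S. x u \<noteq> 0" and cd: "cgcond a S x" by blast
  show "is_eigenvalue S (complete_weight a S lp) (ecg a (card S) lp)"
    unfolding is_eigenvalue_def using nz cg_eig[OF fin a c cd] by blast
next
  fix \<mu> assume "is_eigenvalue S (complete_weight a S lp) \<mu>"
  then obtain x where nz: "\<exists>u\<in>S. x u \<noteq> 0"
     and eq: "\<forall>u\<in>S. (\<Sum>v\<in>S. complete_weight a S lp u v * x v) = \<mu> * x u"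
    unfolding is_eigenvalue_def by blast
  have "\<mu> * (\<Sum>u\<in>S. (x u)^2) \<ge> ecg a (card S) lp * (\<Sum>u\<in>S. (x u)^2)"
    using cg_ineq[OF fin a c, of x] rayleigh[OF eq] by simp
  moreover have "(\<Sum>u\<in>S. (x u)^2) > 0" using sq_pos[OF fin nz] .
  ultimately show "ecg a (card S) lp \<le> \<mu>" by simp
qed


theorem mainTheorem2:
  fixes V :: "'a set" and w :: "'a \<Rightarrow> 'a \<Rightarrow> real"
    and m :: nat and a :: "nat \<Rightarrow> real" and Vs :: "nat \<Rightarrow> 'a set" and lp :: "nat \<Rightarrow> bool"
  assumes "finite V" and "V \<noteq> {}"
    and "\<forall>u v. w u v = w v u"
    and "complete_graph_decomposition V w m a Vs lp"
  shows "smallest_eigenvalue V w \<ge> lambda_C V m a Vs lp \<and>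
    (smallest_eigenvalue V w = lambda_C V m a Vs lp \<longleftrightarrow>
      (\<exists>x :: 'a \<Rightarrow> real. (\<exists>u\<in>V. x u \<noteq> 0) \<and>
        (\<forall>u\<in>V. lambda_Cu m a Vs lp u > lambda_C V m a Vs lp \<longrightarrow> x u = 0) \<and>
        (\<forall>j<m. a j < 0 \<longrightarrow> (\<forall>u\<in>Vs j. \<forall>v\<in>Vs j. x u = x v)) \<and>
        (\<forall>j<m. a j > 0 \<and> card (Vs j) > 1 \<longrightarrow> (\<Sum>u\<in>Vs j. x u) = 0)))"
proof -
  note fin = assms(1) and ne = assms(2)
  have sym: "\<forall>u\<in>V. \<forall>v\<in>V. w u v = w v u" using assms(3) by blast
  have dj: "a j \<noteq> 0" "Vs j \<subseteq> V" "if lp j then card (Vs j) \<ge> 1 else card (Vs j) \<ge> 2" if "j < m" for j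
    using assms(4) that unfolding complete_graph_decomposition_def by auto
  have finj: "finite (Vs j)" if "j < m" for j using dj(2)[OF that] fin finite_subset by blast
  have wdec: "w u v = (\<Sum>j<m. complete_weight (a j) (Vs j) (lp j) u v)" if "u \<in> V" "v \<in> V" for u v
    using assms(4) that unfolding complete_graph_decomposition_def by auto
  define cw where "cw j = complete_weight (a j) (Vs j) (lp j)" for j
  define E where "E j = ecg (a j) (card (Vs j)) (lp j)" for j
  define lC where "lC = lambda_C V m a Vs lp"
  define lu where "lu u = lambda_Cu m a Vs lp u" for u
  define Q where "Q x = (\<Sum>u\<in>V. (x u)^2)" for x :: "'a \<Rightarrow> real"
  define R where "R j u x = (\<Sum>v\<in>Vs j. cw j u v * x v)" for j u and x :: "'a \<Rightarrow> real"
  have lu_eq: "lu u = (\<Sum>j\<in>{..<m} \<inter> {j. u \<in> Vs j}. E j)" for u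
  proof -
    have "{j. j < m \<and> u \<in> Vs j} = {..<m} \<inter> {j. u \<in> Vs j}" by auto
    thus ?thesis unfolding lu_def lambda_Cu_def E_def
      using cg_smallest[OF finj dj(1) dj(3)] by (intro sum.cong) auto
  qed
  have luC: "lC \<le> lu u" if "u \<in> V" for u
    unfolding lC_def lu_def lambda_C_def using fin that by (intro Min_le) auto
  have rowj: "(\<Sum>v\<in>V. cw j u v * x v) = (if u \<in> Vs j then R j u x else 0)" if "j < m" for j u x
  proof (cases "u \<in> Vs j")
    case True
    have "(\<Sum>v\<in>V. cw j u v * x v) = R j u x" unfolding R_def
      using dj(2)[OF that] fin by (intro sum.mono_neutral_right) (auto simp: cw_def complete_weight_def)
    thus ?thesis using True by simp
  qed (auto simp: cw_def complete_weight_def)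
  have rowH: "(\<Sum>v\<in>V. w u v * x v) = (\<Sum>j<m. if u \<in> Vs j then R j u x else 0)" if "u \<in> V" for u x
  proof -
    have "(\<Sum>v\<in>V. w u v * x v) = (\<Sum>v\<in>V. \<Sum>j<m. cw j u v * x v)"
      using that wdec by (intro sum.cong) (auto simp: cw_def sum_distrib_right)
    also have "\<dots> = (\<Sum>j<m. \<Sum>v\<in>V. cw j u v * x v)" by (rule sum.swap)
    also have "\<dots> = (\<Sum>j<m. if u \<in> Vs j then R j u x else 0)" using rowj by (intro sum.cong) auto
    finally show ?thesis .
  qed
  have qH: "(\<Sum>u\<in>V. x u * (\<Sum>v\<in>V. w u v * x v)) = (\<Sum>j<m. \<Sum>u\<in>Vs j. x u * R j u x)" for x
  proof -
    have "(\<Sum>u\<in>V. x u * (\<Sum>v\<in>V. w u v * x v)) = (\<Sum>u\<in>V. \<Sum>j<m. if u \<in> Vs j then x u * R j u x else 0)"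
      using rowH by (intro sum.cong) (auto simp: sum_distrib_left intro!: sum.cong)
    also have "\<dots> = (\<Sum>j<m. \<Sum>u\<in>V. if u \<in> Vs j then x u * R j u x else 0)" by (rule sum.swap)
    also have "\<dots> = (\<Sum>j<m. \<Sum>u\<in>Vs j. x u * R j u x)"
    proof (rule sum.cong[OF refl])
      fix j assume "j \<in> {..<m}"
      hence "V \<inter> Vs j = Vs j" using dj(2) by auto
      thus "(\<Sum>u\<in>V. if u \<in> Vs j then x u * R j u x else 0) = (\<Sum>u\<in>Vs j. x u * R j u x)"
        using sum.inter_restrict[OF fin, of "\<lambda>u. x u * R j u x" "Vs j"] by simp
    qed
    finally show ?thesis .
  qed
  have wsum: "(\<Sum>j<m. E j * (\<Sum>u\<in>Vs j. (x u)^2)) = (\<Sum>u\<in>V. lu u * (x u)^2)" for x :: "'a \<Rightarrow> real"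
  proof -
    have "(\<Sum>j<m. E j * (\<Sum>u\<in>Vs j. (x u)^2)) = (\<Sum>j<m. \<Sum>u\<in>V. if u \<in> Vs j then E j * (x u)^2 else 0)"
    proof (rule sum.cong[OF refl])
      fix j assume "j \<in> {..<m}"
      hence "V \<inter> Vs j = Vs j" using dj(2) by auto
      thus "E j * (\<Sum>u\<in>Vs j. (x u)^2) = (\<Sum>u\<in>V. if u \<in> Vs j then E j * (x u)^2 else 0)"
        using sum.inter_restrict[OF fin, of "\<lambda>u. E j * (x u)^2" "Vs j"] by (simp add: sum_distrib_left)
    qed
    also have "\<dots> = (\<Sum>u\<in>V. \<Sum>j<m. if u \<in> Vs j then E j * (x u)^2 else 0)" by (rule sum.swap)
    also have "\<dots> = (\<Sum>u\<in>V. lu u * (x u)^2)"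
    proof (rule sum.cong[OF refl])
      fix u
      show "(\<Sum>j<m. if u \<in> Vs j then E j * (x u)^2 else 0) = lu u * (x u)^2"
        unfolding lu_eq using sum.inter_restrict[of "{..<m}" "\<lambda>j. E j * (x u)^2" "{j. u \<in> Vs j}"]
        by (simp add: sum_distrib_right)
    qed
    finally show ?thesis .
  qed
  define g1 where "g1 x = (\<Sum>j<m. (\<Sum>u\<in>Vs j. x u * R j u x) - E j * (\<Sum>u\<in>Vs j. (x u)^2))" for x :: "'a \<Rightarrow> real"
  define g2 where "g2 x = (\<Sum>u\<in>V. (lu u - lC) * (x u)^2)" for x :: "'a \<Rightarrow> real"
  have gj: "(\<Sum>u\<in>Vs j. x u * R j u x) - E j * (\<Sum>u\<in>Vs j. (x u)^2) \<ge> 0 \<and>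
            ((\<Sum>u\<in>Vs j. x u * R j u x) - E j * (\<Sum>u\<in>Vs j. (x u)^2) = 0 \<longleftrightarrow> cgcond (a j) (Vs j) x)"
    if "j < m" for j x
    using cg_ineq[OF finj[OF that] dj(1)[OF that] dj(3)[OF that], of x]
    unfolding R_def cw_def E_def by auto
  have g1nn: "g1 x \<ge> 0" for x unfolding g1_def using gj by (intro sum_nonneg) auto
  have g2nn: "g2 x \<ge> 0" for x unfolding g2_def using luC by (intro sum_nonneg) auto
  have gap: "(\<Sum>u\<in>V. x u * (\<Sum>v\<in>V. w u v * x v)) - lC * Q x = g1 x + g2 x" for x
  proof -
    have "g1 x = (\<Sum>u\<in>V. x u * (\<Sum>v\<in>V. w u v * x v)) - (\<Sum>u\<in>V. lu u * (x u)^2)"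
      unfolding g1_def qH wsum[symmetric] by (simp add: sum_subtractf)
    moreover have "g2 x = (\<Sum>u\<in>V. lu u * (x u)^2) - lC * Q x"
      unfolding g2_def Q_def by (simp add: sum_subtractf sum_distrib_left algebra_simps)
    ultimately show ?thesis by simp
  qed
  obtain \<mu> where mu: "\<mu> = smallest_eigenvalue V w" by blast
  have mu_ev: "is_eigenvalue V w \<mu>" and mu_min: "\<And>\<nu>. is_eigenvalue V w \<nu> \<Longrightarrow> \<mu> \<le> \<nu>"
    using smallest_props[OF fin ne sym] mu by auto
  obtain x0 where x0nz: "\<exists>u\<in>V. x0 u \<noteq> 0" and x0eq: "\<forall>u\<in>V. (\<Sum>v\<in>V. w u v * x0 v) = \<mu> * x0 u"
    using mu_ev unfolding is_eigenvalue_def by blast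
  have Qpos: "Q x0 > 0" unfolding Q_def using sq_pos[OF fin x0nz] .
  have diff: "(\<mu> - lC) * Q x0 = g1 x0 + g2 x0"
    using gap[of x0] rayleigh[OF x0eq] unfolding Q_def by (simp add: algebra_simps)
  have part1: "\<mu> \<ge> lC"
  proof -
    have "(\<mu> - lC) * Q x0 \<ge> 0" using diff g1nn g2nn by simp
    thus ?thesis using Qpos by (simp add: zero_le_mult_iff)
  qed
  have part2: "\<mu> = lC \<longleftrightarrow> (\<exists>x :: 'a \<Rightarrow> real. (\<exists>u\<in>V. x u \<noteq> 0) \<and>
        (\<forall>u\<in>V. lu u > lC \<longrightarrow> x u = 0) \<and> (\<forall>j<m. cgcond (a j) (Vs j) x))"
  proof
    assume "\<mu> = lC"
    hence "g1 x0 + g2 x0 = 0" using diff by simp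
    hence z1: "g1 x0 = 0" and z2: "g2 x0 = 0" using g1nn[of x0] g2nn[of x0] by linarith+
    have "\<forall>j\<in>{..<m}. (\<Sum>u\<in>Vs j. x0 u * R j u x0) - E j * (\<Sum>u\<in>Vs j. (x0 u)^2) = 0"
      using z1 unfolding g1_def using gj by (subst (asm) sum_nonneg_eq_0_iff) auto
    hence c1: "\<forall>j<m. cgcond (a j) (Vs j) x0" using gj by auto
    have "\<forall>u\<in>V. (lu u - lC) * (x0 u)^2 = 0"
      using z2 unfolding g2_def using luC fin by (subst (asm) sum_nonneg_eq_0_iff) auto
    hence c2: "\<forall>u\<in>V. lu u > lC \<longrightarrow> x0 u = 0" by auto
    show "\<exists>x :: 'a \<Rightarrow> real. (\<exists>u\<in>V. x u \<noteq> 0) \<and> (\<forall>u\<in>V. lu u > lC \<longrightarrow> x u = 0) \<and> (\<forall>j<m. cgcond (a j) (Vs j) x)"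
      using x0nz c1 c2 by blast
  next
    assume "\<exists>x :: 'a \<Rightarrow> real. (\<exists>u\<in>V. x u \<noteq> 0) \<and> (\<forall>u\<in>V. lu u > lC \<longrightarrow> x u = 0) \<and> (\<forall>j<m. cgcond (a j) (Vs j) x)"
    then obtain x :: "'a \<Rightarrow> real" where nz: "\<exists>u\<in>V. x u \<noteq> 0" and z: "\<forall>u\<in>V. lu u > lC \<longrightarrow> x u = 0"
      and cd: "\<forall>j<m. cgcond (a j) (Vs j) x" by blast
    have "\<forall>u\<in>V. (\<Sum>v\<in>V. w u v * x v) = lC * x u"
    proof
      fix u assume u: "u \<in> V"
      have "(\<Sum>v\<in>V. w u v * x v) = (\<Sum>j<m. if u \<in> Vs j then E j * x u else 0)"
        unfolding rowH[OF u]
      proof (rule sum.cong[OF refl])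
        fix j assume "j \<in> {..<m}"
        hence j: "j < m" by simp
        show "(if u \<in> Vs j then R j u x else 0) = (if u \<in> Vs j then E j * x u else 0)"
          using cg_eig[OF finj[OF j] dj(1)[OF j] dj(3)[OF j], of x u] cd j
          unfolding R_def cw_def E_def by auto
      qed
      also have "\<dots> = lu u * x u"
        unfolding lu_eq using sum.inter_restrict[of "{..<m}" "\<lambda>j. E j * x u" "{j. u \<in> Vs j}"]
        by (simp add: sum_distrib_right)
      also have "\<dots> = lC * x u"
      proof (cases "lu u > lC")
        case True thus ?thesis using z u by simp
      next
        case False thus ?thesis using luC[OF u] by simp
      qed
      finally show "(\<Sum>v\<in>V. w u v * x v) = lC * x u" .
    qed
    hence "is_eigenvalue V w lC" unfolding is_eigenvalue_def using nz by blast
    hence "\<mu> \<le> lC" by (rule mu_min)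
    thus "\<mu> = lC" using part1 by simp
  qed
  have cgc: "(\<forall>j<m. cgcond (a j) (Vs j) x) \<longleftrightarrow>
     (\<forall>j<m. a j < 0 \<longrightarrow> (\<forall>u\<in>Vs j. \<forall>v\<in>Vs j. x u = x v)) \<and>
     (\<forall>j<m. a j > 0 \<and> card (Vs j) > 1 \<longrightarrow> (\<Sum>u\<in>Vs j. x u) = 0)" for x :: "'a \<Rightarrow> real"
    unfolding cgcond_def by blast
  show ?thesis using part1 part2 cgc unfolding mu lC_def lu_def by simp
qed

end
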